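(* Let $N\ge 3$, let $k$ be a positive odd integer, $l=k2^N$, let $m$ be a positive integer and $n=l+m$. For a positive integer $a$ let $g(a)=(-1)^{a-1}\frac{(2a-3)!!}{2a}$. Then $$g(n)\equiv g(m)+\begin{cases}(-1)^{\frac{m-1}{2}}\frac{l}{2}\pmod{2^{N+1}}, & \text{if } 2\nmid m,\\ l+\frac{l}{2mn}\pmod{2^{N+1}}, & \text{if } 2\mid m,\ 4\nmid m,\\ l-\frac{l}{2mn}\pmod{2^{N+1}}, & \text{if } 4\mid m,\ 8\nmid m.\end{cases}$$
   Context: For a positive odd integer $b$, $b!!=b(b-2)\cdots3\cdot1$, and $(-1)!!=1$. Congruences between rational numbers modulo $2^{N+1}$ mean the difference has $2$-adic valuation $\ge N+1$. *)

theory Defs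
  imports Complex_Main
begin

definition dfact :: "int \<Rightarrow> int" where
  "dfact b = (\<Prod>i\<in>{i\<in>{1..b}. odd i}. i)"

definition g :: "nat \<Rightarrow> rat" where
  "g a = (-1) ^ (a - 1) * of_int (dfact (2 * int a - 3)) / (2 * of_nat a)"

text \<open>Congruence of rationals modulo 2^e: the difference has 2-adic valuation >= e.\<close>
definition cong2 :: "nat \<Rightarrow> rat \<Rightarrow> rat \<Rightarrow> bool" where
  "cong2 e x y = (case quotient_of (x - y) of (p, q) \<Rightarrow> (2::int) ^ e dvd p \<and> odd q)"

end

theory Submission
  imports Defs
begin


fun dd :: "nat \<Rightarrow> int" where
  "dd 0 = 1" | "dd (Suc j) = dd j * (2 * int j + 1)"
fun ee :: "nat \<Rightarrow> int" where
  "ee 0 = 0" | "ee (Suc j) = ee j * (2 * int j + 1) + dd j"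
fun rr :: "nat \<Rightarrow> nat \<Rightarrow> int" where
  "rr L 0 = 1" | "rr L (Suc j) = rr L j * (2 * int L + 2 * int j + 1)"

lemma dfact_dd: "dfact (2 * int j - 1) = dd j"
proof (induction j)
  case 0
  have "{i\<in>{1..(-1::int)}. odd i} = {}" by auto
  then show ?case by (simp add: dfact_def)
next
  case (Suc j)
  have S: "{i\<in>{1..2 * int (Suc j) - 1}. odd i} = insert (2 * int j + 1) {i\<in>{1..2 * int j - 1}. odd i}"
    by (auto, presburger+)
  have F: "finite {i\<in>{1..2 * int j - 1}. odd i}" by (rule finite_subset[of _ "{1..2*int j - 1}"]) auto
  have N: "2 * int j + 1 \<notin> {i\<in>{1..2 * int j - 1}. odd i}" by simp
  show ?case unfolding dfact_def S prod.insert[OF F N] using Suc by (simp add: dfact_def mult.commute)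
qed

lemma dd_add: "dd (L + j) = dd L * rr L j"
  by (induction j) (auto simp: algebra_simps)

lemma rr_exp: "(4 * int L ^ 2) dvd (rr L j - dd j - 2 * int L * ee j)"
proof (induction j)
  case 0 then show ?case by simp
next
  case (Suc j)
  then obtain c where c: "rr L j - dd j - 2 * int L * ee j = 4 * int L ^ 2 * c" by (auto elim: dvdE)
  have "rr L (Suc j) - dd (Suc j) - 2 * int L * ee (Suc j)
      = 4 * int L ^ 2 * (c * (2 * int L + 2 * int j + 1) + ee j)"
    using c by (simp add: algebra_simps power2_eq_square)
  then show ?case by simp
qed

lemma shift32: "64 dvd (dd (32 + x) - dd x) \<and> 16 dvd (ee (32 + x) - ee x)"
proof (induction x)
  case 0
  have "dd 32 mod 64 = 1" "ee 32 mod 16 = 0" by code_simp+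
  then show ?case by (simp add: mod_eq_dvd_iff[symmetric]) (simp add: dvd_eq_mod_eq_0)
next
  case (Suc x)
  then obtain a b where a0: "dd (32 + x) - dd x = 64 * a" and b0: "ee (32 + x) - ee x = 16 * b"
    by (meson dvdE)
  have a: "dd (32 + x) = dd x + 64 * a" and b: "ee (32 + x) = ee x + 16 * b" using a0 b0 by linarith+
  have d1: "dd (32 + Suc x) = dd (32 + x) * (2 * int x + 65)"
    by (simp only: add_Suc_right dd.simps) simp
  have e1: "ee (32 + Suc x) = ee (32 + x) * (2 * int x + 65) + dd (32 + x)"
    by (simp only: add_Suc_right ee.simps) simp
  have "dd (32 + Suc x) - dd (Suc x) = 64 * (a * (2 * int x + 1) + dd (32 + x))"
    unfolding d1 using a by (simp add: algebra_simps)
  moreover have "ee (32 + Suc x) - ee (Suc x) = 16 * (b * (2 * int x + 1) + 4 * ee (32+x) + 4*a)"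
    unfolding e1 using a b by (simp add: algebra_simps)
  ultimately show ?case by simp
qed


definition Q1 :: "nat \<Rightarrow> int" where "Q1 j = 2*(int j+1)*(dd j + ee j) - dd j - (-1)^(j div 2)*(int j+1)^2"
definition Q2 :: "nat \<Rightarrow> int" where "Q2 j = dd j - 2*(int j+1)*(dd j + ee j) - 2*(int j+1)^2 - 1"
definition Q3 :: "nat \<Rightarrow> int" where "Q3 j = dd j - 2*(int j+1)*(dd j + ee j) - 2*(int j+1)^2 + 1"
lemma Q1_0: "4 dvd Q1 0" by code_simp
lemma Q1_2: "4 dvd Q1 2" by code_simp
lemma Q1_4: "4 dvd Q1 4" by code_simp
lemma Q1_6: "4 dvd Q1 6" by code_simp
lemma Q1_8: "4 dvd Q1 8" by code_simp
lemma Q1_10: "4 dvd Q1 10" by code_simp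
lemma Q1_12: "4 dvd Q1 12" by code_simp
lemma Q1_14: "4 dvd Q1 14" by code_simp
lemma Q1_16: "4 dvd Q1 16" by code_simp
lemma Q1_18: "4 dvd Q1 18" by code_simp
lemma Q1_20: "4 dvd Q1 20" by code_simp
lemma Q1_22: "4 dvd Q1 22" by code_simp
lemma Q1_24: "4 dvd Q1 24" by code_simp
lemma Q1_26: "4 dvd Q1 26" by code_simp
lemma Q1_28: "4 dvd Q1 28" by code_simp
lemma Q1_30: "4 dvd Q1 30" by code_simp
lemma Q2_1: "16 dvd Q2 1" by code_simp
lemma Q2_5: "16 dvd Q2 5" by code_simp
lemma Q2_9: "16 dvd Q2 9" by code_simp
lemma Q2_13: "16 dvd Q2 13" by code_simp
lemma Q2_17: "16 dvd Q2 17" by code_simp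
lemma Q2_21: "16 dvd Q2 21" by code_simp
lemma Q2_25: "16 dvd Q2 25" by code_simp
lemma Q2_29: "16 dvd Q2 29" by code_simp
lemma Q3_3: "64 dvd Q3 3" by code_simp
lemma Q3_11: "64 dvd Q3 11" by code_simp
lemma Q3_19: "64 dvd Q3 19" by code_simp
lemma Q3_27: "64 dvd Q3 27" by code_simp
lemma ee8: "(16::int) dvd ee 8" by code_simp
lemma ee16: "(16::int) dvd ee 16" by code_simp
lemma dd8: "(128::int) dvd dd 8 - 17" by code_simp


lemma red32: "64 dvd (dd (32*q + r) - dd r) \<and> 16 dvd (ee (32*q + r) - ee r)"
proof (induction q)
  case 0 then show ?case by simp
next
  case (Suc q)
  have e: "32 * Suc q + r = 32 + (32*q + r)" by simp
  let ?x = "32*q+r"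
  have "dd (32 + ?x) - dd r = (dd (32 + ?x) - dd ?x) + (dd ?x - dd r)"
       "ee (32 + ?x) - ee r = (ee (32 + ?x) - ee ?x) + (ee ?x - ee r)" by simp_all
  with shift32[of ?x] Suc show ?case unfolding e by (simp only: dvd_add)
qed

lemma red32': obtains a b where "dd j = dd (j mod 32) + 64 * a" "ee j = ee (j mod 32) + 16 * b"
proof -
  have j: "32 * (j div 32) + j mod 32 = j" by simp
  from red32[of "j div 32" "j mod 32"] have "64 dvd dd j - dd (j mod 32)" "16 dvd ee j - ee (j mod 32)"
    unfolding j by auto
  then obtain a b where "dd j - dd (j mod 32) = 64 * a" "ee j - ee (j mod 32) = 16 * b"
    by (auto elim!: dvdE)
  then have "dd j = dd (j mod 32) + 64 * a" "ee j = ee (j mod 32) + 16 * b" by linarith+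
  then show ?thesis using that by blast
qed


lemma dvd_diffI: fixes a b M w :: int shows "M dvd b \<Longrightarrow> a - b = M * w \<Longrightarrow> M dvd a"
  by (metis diff_add_cancel dvd_add dvd_triv_left)

lemma T1: "\<forall>r\<in>{..<32}. even r \<longrightarrow> 4 dvd Q1 r"
  by (simp add: lessThan_nat_numeral Q1_0 Q1_2 Q1_4 Q1_6 Q1_8 Q1_10 Q1_12 Q1_14 Q1_16 Q1_18 Q1_20 Q1_22 Q1_24 Q1_26 Q1_28 Q1_30 del: dvd_diff)
lemma T2: "\<forall>r\<in>{..<32}. r mod 4 = 1 \<longrightarrow> 16 dvd Q2 r"
  by (simp add: lessThan_nat_numeral Q2_1 Q2_1[unfolded One_nat_def] Q2_5 Q2_9 Q2_13 Q2_17 Q2_21 Q2_25 Q2_29 del: dvd_diff)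
lemma T3: "\<forall>r\<in>{..<32}. r mod 8 = 3 \<longrightarrow> 64 dvd Q3 r"
  by (simp add: lessThan_nat_numeral Q3_3 Q3_11 Q3_19 Q3_27 del: dvd_diff)

lemma R1: assumes "even j" shows "4 dvd Q1 j"
proof -
  define q r where "q = j div 32" and "r = j mod 32"
  have j: "j = 32 * q + r" and "r < 32" by (auto simp: q_def r_def)
  have "even r" using assms j by simp
  then have Qr: "4 dvd Q1 r" using T1 \<open>r < 32\<close> by auto
  obtain a b where a: "dd j = dd r + 64 * a" and b: "ee j = ee r + 16 * b"
    by (rule red32'[of j, folded r_def])
  have jd: "j div 2 = 16 * q + r div 2" using j \<open>even r\<close> by auto
  have s: "(-1::int)^(j div 2) = (-1)^(r div 2)" unfolding jd power_add power_mult by simp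
  have ji: "int j = 32 * int q + int r" using j by simp
  have "Q1 j - Q1 r = 4 * (16*q*(dd r + ee r + 64*a + 16*b) + (int r+1)*(32*a+8*b) - 16*a
        - (-1)^(r div 2) * (256*q^2 + 16*q*(int r+1)))"
    unfolding Q1_def s a b ji by (simp add: algebra_simps power2_eq_square)
  then show ?thesis by (rule dvd_diffI[OF Qr])
qed


lemma Q32: "Q3 j = Q2 j + 2" by (simp add: Q2_def Q3_def)

lemma R23a: assumes "odd j" obtains r c a b where "r < 32" "j mod 32 = r" "int r + 1 = 2 * c"
  "Q2 j - Q2 r = 64*a - 64*(int (j div 32))*(dd r + ee r + 64*a + 16*b) - 4*c*(64*a+16*b) - 2048*(int (j div 32))^2 - 256*(int (j div 32))*c"
proof -
  define q r where "q = j div 32" and "r = j mod 32"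
  have j: "j = 32 * q + r" and r: "r < 32" by (auto simp: q_def r_def)
  have "odd r" using assms j by simp
  then obtain h where "r = 2 * h + 1" by (rule oddE)
  then have c: "int r + 1 = 2 * (int h + 1)" by simp
  obtain a b where a: "dd j = dd r + 64 * a" and b: "ee j = ee r + 16 * b"
    by (rule red32'[of j, folded r_def])
  have ji: "int j = 32 * int q + 2 * (int h + 1) - 1" using j c by simp
  have X: "Q2 j - Q2 r = 64*a - 64*(int q)*(dd r + ee r + 64*a + 16*b) - 4*(int h + 1)*(64*a+16*b) - 2048*(int q)^2 - 256*(int q)*(int h + 1)"
    unfolding Q2_def a b ji c by (simp add: algebra_simps power2_eq_square)
  have r2: "j mod 32 = r" by (simp add: r_def)
  show ?thesis by (rule that[OF r r2 c X[unfolded q_def]])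
qed


lemma R2: assumes "j mod 4 = 1" shows "16 dvd Q2 j"
proof -
  have "j mod 2 = 1" using assms mod_mod_cancel[of 2 4 j] by simp
  then have "odd j" by (simp add: odd_iff_mod_2_eq_one)
  then obtain r c a b where r: "r < 32" "j mod 32 = r" and c: "int r + 1 = 2 * c" and
    e: "Q2 j - Q2 r = 64*a - 64*(int (j div 32))*(dd r + ee r + 64*a + 16*b) - 4*c*(64*a+16*b) - 2048*(int (j div 32))^2 - 256*(int (j div 32))*c"
    by (rule R23a)
  have "r mod 4 = 1" using assms r(2) mod_mod_cancel[of 4 32 j] by simp
  moreover have "r \<in> {..<32}" using r by simp
  ultimately have Qr: "16 dvd Q2 r" using T2 by blast
  have "Q2 j - Q2 r = 16 * (4*a - 4*(int (j div 32))*(dd r + ee r + 64*a + 16*b) - c*(16*a+4*b) - 128*(int (j div 32))^2 - 16*(int (j div 32))*c)"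
    unfolding e by (simp add: algebra_simps)
  then show ?thesis by (rule dvd_diffI[OF Qr])
qed

lemma R3: assumes "j mod 8 = 3" shows "64 dvd Q3 j"
proof -
  have "j mod 2 = 1" using assms mod_mod_cancel[of 2 8 j] by simp
  then have "odd j" by (simp add: odd_iff_mod_2_eq_one)
  then obtain r c a b where r: "r < 32" "j mod 32 = r" and c: "int r + 1 = 2 * c" and
    e: "Q2 j - Q2 r = 64*a - 64*(int (j div 32))*(dd r + ee r + 64*a + 16*b) - 4*c*(64*a+16*b) - 2048*(int (j div 32))^2 - 256*(int (j div 32))*c"
    by (rule R23a)
  have r8: "r mod 8 = 3" using assms r(2) mod_mod_cancel[of 8 32 j] by simp
  moreover have "r \<in> {..<32}" using r by simp
  ultimately have Qr: "64 dvd Q3 r" using T3 by blast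
  have "r = 8 * (r div 8) + 3" using r8 by (metis div_mult_mod_eq mult.commute)
  then have "int r = int (8 * (r div 8) + 3)" by (rule arg_cong)
  then have "int r + 1 = 4 * (2 * int (r div 8) + 1)" by simp
  then have d: "c = 2 * (2 * int (r div 8) + 1)" using c by linarith
  have "Q3 j - Q3 r = 64 * (a - (int (j div 32))*(dd r + ee r + 64*a + 16*b) - (2 * int (r div 8) + 1)*(8*a+2*b) - 32*(int (j div 32))^2 - 8*(int (j div 32))*(2 * int (r div 8) + 1))"
    unfolding Q32 using e unfolding d by (simp add: algebra_simps)
  then show ?thesis by (rule dvd_diffI[OF Qr])
qed


lemma E16: assumes "N \<ge> 3" shows "16 dvd ee (2^N)"
proof -
  consider "N = 3" | "N = 4" | "N \<ge> 5" using assms by linarith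
  then show ?thesis
  proof cases
    case 1 then show ?thesis using ee8 by simp
  next
    case 2 then show ?thesis using ee16 by simp
  next
    case 3
    then obtain t where "N = 5 + t" using le_Suc_ex by blast
    then have "(2::nat)^N = 32 * 2^t" by (simp add: power_add)
    then have "(2::nat)^N mod 32 = 0" by simp
    moreover obtain a b where "ee (2^N) = ee ((2^N) mod 32) + 16 * b" by (rule red32'[of "2^N"])
    ultimately show ?thesis by simp
  qed
qed

lemma pow_split: assumes "N \<ge> 3" obtains p' :: int where "(2::int)^N = 8 * p'"
proof -
  obtain t where "N = 3 + t" using assms le_Suc_ex by blast
  then have "(2::int)^N = 8 * 2^t" by (simp add: power_add)
  then show ?thesis using that by simp
qed

lemma DP: assumes "N \<ge> 3" shows "2^(N+4) dvd dd (2^N) - 1 - 2^(N+1)"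
  using assms
proof (induction N rule: nat_induct_at_least)
  case base
  then show ?case using dd8 by simp
next
  case (Suc N)
  define p :: int where "p = 2^N"
  obtain p' where p': "p = 8 * p'" using pow_split[OF Suc(1)] p_def by blast
  obtain w where w: "dd (2^N) - 1 - 2^(N+1) = 2^(N+4) * w" using Suc(2) by (auto elim: dvdE)
  have X: "dd (2^N) = 1 + 2*p + 16*p*w" using w unfolding p_def by (simp add: power_add algebra_simps)
  obtain e where e: "ee (2^N) = 16 * e" using E16[OF Suc(1)] by (auto elim: dvdE)
  obtain z where z: "rr (2^N) (2^N) - dd (2^N) - 2 * int (2^N) * ee (2^N) = 4 * int (2^N) ^ 2 * z"
    using rr_exp by (meson dvdE)
  have R: "rr (2^N) (2^N) = dd (2^N) + 2 * p * (16 * e) + 4 * p^2 * z"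
    using z e unfolding p_def by simp
  have "dd (2^(Suc N)) = dd (2^N) * rr (2^N) (2^N)"
    using dd_add[of "2^N" "2^N"] by (simp add: mult_2)
  also have "\<dots> = (1 + 2*p + 16*p*w) * ((1 + 2*p + 16*p*w) + 2 * p * (16 * e) + 4 * p^2 * z)"
    unfolding R X ..
  finally have A: "dd (2^(Suc N)) = (1 + 2*p + 16*p*w) * ((1 + 2*p + 16*p*w) + 2 * p * (16 * e) + 4 * p^2 * z)" .
  have B: "(2::int)^(Suc N + 1) = 4 * p" unfolding p_def by (simp add: power_add)
  have "(1 + 2*p + 16*p*w) * ((1 + 2*p + 16*p*w) + 2 * p * (16 * e) + 4 * p^2 * z) - 1 - 4 * p
     = 32 * p * (p' + w + 2*p*w + 8*p*w^2 + (1 + 2*p + 16*p*w) * (e + p'*z))"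
    unfolding p' by (simp add: algebra_simps power2_eq_square)
  then have "dd (2^(Suc N)) - 1 - 2^(Suc N + 1) = 32 * p * (p' + w + 2*p*w + 8*p*w^2 + (1 + 2*p + 16*p*w) * (e + p'*z))"
    unfolding A B .
  moreover have "(2::int)^(Suc N + 4) = 32 * p" unfolding p_def by (simp add: power_add)
  ultimately show ?case by simp
qed



lemma DB: assumes "N \<ge> 3" shows "2^(N+4) dvd dd (b * 2^N) - 1 - int b * 2^(N+1)"
proof (induction b)
  case 0 then show ?case by simp
next
  case (Suc b)
  define p :: int where "p = 2^N"
  obtain p' where p': "p = 8 * p'" using pow_split[OF assms] p_def by blast
  have P16: "(2::int)^(N+4) = 16 * p" unfolding p_def by (simp add: power_add)
  obtain w1 where w1: "dd (b * 2^N) - 1 - int b * 2^(N+1) = 2^(N+4) * w1" using Suc by (auto elim: dvdE)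
  have Y: "dd (b * 2^N) = 1 + 2*int b*p + 16*p*w1" using w1 unfolding P16 unfolding p_def by (simp add: power_add algebra_simps)
  obtain w2 where w2: "dd (2^N) - 1 - 2^(N+1) = 2^(N+4) * w2" using DP[OF assms] by (auto elim: dvdE)
  have X: "dd (2^N) = 1 + 2*p + 16*p*w2" using w2 unfolding P16 unfolding p_def by (simp add: power_add algebra_simps)
  obtain e where e: "ee (2^N) = 16 * e" using E16[OF assms] by (auto elim: dvdE)
  obtain z where z: "rr (b * 2^N) (2^N) - dd (2^N) - 2 * int (b * 2^N) * ee (2^N) = 4 * int (b * 2^N) ^ 2 * z"
    using rr_exp by (meson dvdE)
  have R: "rr (b * 2^N) (2^N) = (1 + 2*p + 16*p*w2) + 2 * int b * p * (16 * e) + 4 * (int b * p)^2 * z"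
    using z e X unfolding p_def by simp
  have "dd (Suc b * 2^N) = dd (b * 2^N) * rr (b * 2^N) (2^N)"
    using dd_add[of "b * 2^N" "2^N"] by (simp add: add.commute)
  also have "\<dots> = (1 + 2*int b*p + 16*p*w1) * ((1 + 2*p + 16*p*w2) + 2 * int b * p * (16 * e) + 4 * (int b * p)^2 * z)"
    unfolding R Y ..
  finally have A: "dd (Suc b * 2^N) = (1 + 2*int b*p + 16*p*w1) * ((1 + 2*p + 16*p*w2) + 2 * int b * p * (16 * e) + 4 * (int b * p)^2 * z)" .
  have B: "int (Suc b) * 2^(N+1) = 2 * (int b + 1) * p" unfolding p_def by (simp add: power_add)
  have "(1 + 2*int b*p + 16*p*w1) * ((1 + 2*p + 16*p*w2) + 2 * int b * p * (16 * e) + 4 * (int b * p)^2 * z) - 1 - 2 * (int b + 1) * p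
     = 16 * p * (w1 + 2*int b*p' + 2*p*w1 + (1 + 2*int b*p + 16*p*w1) * (w2 + 2*int b*e + 2*(int b)^2*p'*z))"
    unfolding p' by (simp add: algebra_simps power2_eq_square)
  then have "dd (Suc b * 2^N) - 1 - int (Suc b) * 2^(N+1) = 16 * p * (w1 + 2*int b*p' + 2*p*w1 + (1 + 2*int b*p + 16*p*w1) * (w2 + 2*int b*e + 2*(int b)^2*p'*z))"
    unfolding A B .
  then show ?case unfolding P16 by simp
qed

lemma KEY: assumes "N \<ge> 3" "l = k * 2^N"
  shows "2^(N+4) dvd dd (l + j) - dd j - 2 * int l * (dd j + ee j)"
proof -
  define p :: int where "p = 2^N"
  obtain p' where p': "p = 8 * p'" using pow_split[OF assms(1)] p_def by blast
  have P16: "(2::int)^(N+4) = 16 * p" unfolding p_def by (simp add: power_add)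
  have l: "int l = int k * p" unfolding p_def assms(2) by simp
  obtain w where w: "dd (k * 2^N) - 1 - int k * 2^(N+1) = 2^(N+4) * w" using DB[OF assms(1)] by (auto elim: dvdE)
  have Y: "dd l = 1 + 2*int l + 16*p*w" using w unfolding P16 l assms(2) unfolding p_def by (simp add: power_add algebra_simps)
  obtain z where z: "rr l j - dd j - 2 * int l * ee j = 4 * int l ^ 2 * z"
    using rr_exp by (meson dvdE)
  have R: "rr l j = dd j + 2 * int l * ee j + 4 * int l ^ 2 * z" using z by simp
  have "dd (l + j) - dd j - 2 * int l * (dd j + ee j) = (1 + 2*int l + 16*p*w) * (dd j + 2 * int l * ee j + 4 * int l ^ 2 * z) - dd j - 2 * int l * (dd j + ee j)"
    unfolding dd_add Y R ..
  also have "\<dots> = 16 * p * (2*(int k)^2*p'*ee j + w * (dd j + 2 * int l * ee j + 4 * int l ^ 2 * z) + (1 + 2*int l) * 2*(int k)^2*p'*z)"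
    unfolding l p' by (simp add: algebra_simps power2_eq_square)
  finally show ?thesis unfolding P16 by simp
qed



lemma cong2I:
  fixes A u :: int and t e :: nat and x y :: rat
  assumes u: "odd u" and A: "2^(e+t) dvd A" and xy: "x - y = of_int A / of_int (2^t * u)"
  shows "cong2 e x y"
proof -
  obtain p q where pq: "quotient_of (x - y) = (p, q)" by (cases "quotient_of (x - y)")
  have q0: "q > 0" using quotient_of_denom_pos[OF pq] .
  have cop: "coprime p q" using quotient_of_coprime[OF pq] .
  have xy2: "x - y = of_int p / of_int q" using quotient_of_div[OF pq] .
  have u0: "u \<noteq> 0" using u by auto
  have "(of_int p :: rat) / of_int q = of_int A / of_int (2^t * u)" using xy xy2 by simp
  then have "(of_int p :: rat) * of_int (2^t * u) = of_int A * of_int q"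
    using q0 u0 by (simp add: frac_eq_eq)
  then have E1: "p * (2^t * u) = A * q" by (metis of_int_eq_iff of_int_mult)
  obtain a where a: "A = 2^(e+t) * a" using A by (auto elim: dvdE)
  have "2^t * (p * u) = 2^t * (2^e * a * q)" using E1 unfolding a by (simp add: power_add algebra_simps)
  then have E2: "p * u = 2^e * a * q" by simp
  have qodd: "odd q"
  proof
    assume "even q"
    then have "2 dvd p * u" unfolding E2 by simp
    then have "even p" using u by simp
    with \<open>even q\<close> have "is_unit (2::int)" using coprime_common_divisor[OF cop] by blast
    then show False by simp
  qed
  have "2^e dvd p * u" unfolding E2 by simp
  then have "2^e dvd p" using u by (simp add: coprime_dvd_mult_left_iff)
  then show ?thesis unfolding cong2_def pq using qodd by simp
qed



theorem lemma4p5: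
  fixes N k l m n :: nat
  assumes "N \<ge> 3" and "odd k" and "k > 0" and "l = k * 2 ^ N"
    and "m > 0" and "n = l + m"
  shows "(odd m \<longrightarrow>
            cong2 (N + 1) (g n) (g m + (-1) ^ ((m - 1) div 2) * of_nat l / 2))
       \<and> (2 dvd m \<and> \<not> 4 dvd m \<longrightarrow>
            cong2 (N + 1) (g n) (g m + of_nat l + of_nat l / (2 * of_nat m * of_nat n)))
       \<and> (4 dvd m \<and> \<not> 8 dvd m \<longrightarrow>
            cong2 (N + 1) (g n) (g m + of_nat l - of_nat l / (2 * of_nat m * of_nat n)))"
proof -
  define j where "j = m - 1"
  have mj: "m = Suc j" using assms(5) unfolding j_def by simp
  define p :: int where "p = 2^N"
  obtain p' where p': "p = 8 * p'" using pow_split[OF assms(1)] p_def by blast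
  have li: "int l = int k * p" unfolding p_def assms(4) by simp
  have leven: "even l" using assms(1,4) by (simp add: p_def)
  define D where "D = dd j"
  define E where "E = ee j"
  obtain W where W: "dd (l + j) - dd j - 2 * int l * (dd j + ee j) = 2^(N+4) * W"
    using KEY[OF assms(1) assms(4)] by (auto elim: dvdE)
  have P16: "(2::int)^(N+4) = 16 * p" unfolding p_def by (simp add: power_add)
  have D': "dd (l + j) = D + 2 * int l * (D + E) + 16 * p * W" using W unfolding P16 D_def E_def by simp
  have s: "(-1::rat)^(n - 1) = (-1)^j" using leven unfolding assms(6) mj by (simp add: power_add)
  have gm: "g m = (-1)^j * of_int D / (2 * of_nat m)"
  proof -
    have "2 * int m - 3 = 2 * int j - 1" unfolding mj by simp
    then show ?thesis unfolding g_def D_def dfact_dd[symmetric] mj by simp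
  qed
  have gn: "g n = (-1)^j * of_int (dd (l + j)) / (2 * of_nat n)"
  proof -
    have "2 * int n - 3 = 2 * int (l + j) - 1" unfolding assms(6) mj by simp
    then show ?thesis unfolding g_def dfact_dd[symmetric] s by simp
  qed
  have m0: "(of_nat m :: rat) \<noteq> 0" "(of_nat n :: rat) \<noteq> 0" using assms(5,6) by auto
  have mi: "int m = int j + 1" unfolding mj by simp
  have ni: "int n = int l + int m" unfolding assms(6) by simp
  show ?thesis
  proof (intro conjI impI)
    assume "odd m"
    then have "even j" unfolding mj by simp
    define ep :: int where "ep = (-1)^(j div 2)"
    obtain c where c: "Q1 j = 4 * c" using R1[OF \<open>even j\<close>] by (auto elim: dvdE)
    have c': "2 * int m * (D + E) - D - ep * int m ^ 2 = 4 * c" using c unfolding Q1_def mi D_def E_def ep_def by simp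
    define A where "A = dd (l + j) * int m - D * int n - ep * int l * int m * int n"
    have "A = int l * (2 * int m * (D + E) - D - ep * int m ^ 2) - ep * int l ^ 2 * int m + 16 * p * W * int m"
      unfolding A_def D' ni by (simp add: algebra_simps power2_eq_square)
    also have "\<dots> = 4 * p * (int k * c - 2 * ep * int k ^ 2 * p' * int m + 4 * W * int m)"
      unfolding c' li p' by (simp add: algebra_simps power2_eq_square)
    finally have Adv: "2^(N+1+1) dvd A" unfolding p_def by (simp add: power_add)
    have uodd: "odd (int m * int n)" using \<open>odd m\<close> leven assms(6) by simp
    have "g n - (g m + (-1) ^ ((m - 1) div 2) * of_nat l / 2) = of_int A / of_int (2^1 * (int m * int n))"
      unfolding gm gn A_def ep_def using \<open>even j\<close> m0 unfolding j_def[symmetric]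
      by (simp add: field_simps)
    then show "cong2 (N + 1) (g n) (g m + (-1) ^ ((m - 1) div 2) * of_nat l / 2)"
      by (rule cong2I[OF uodd Adv])
  next
    assume "2 dvd m \<and> \<not> 4 dvd m"
    then have "j mod 4 = 1" unfolding mj by presburger
    then have "odd j" by presburger
    obtain c where c: "Q2 j = 16 * c" using R2[OF \<open>j mod 4 = 1\<close>] by (auto elim: dvdE)
    have c': "D - 2 * int m * (D + E) - 2 * int m ^ 2 - 1 = 16 * c" using c unfolding Q2_def mi D_def E_def by simp
    define A where "A = - dd (l + j) * int m + D * int n - 2 * int l * int m * int n - int l"
    have "A = int l * (D - 2 * int m * (D + E) - 2 * int m ^ 2 - 1) - 16 * p * W * int m - 2 * int l ^ 2 * int m"
      unfolding A_def D' ni by (simp add: algebra_simps power2_eq_square)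
    also have "\<dots> = 16 * p * (int k * c - W * int m - int k ^ 2 * p' * int m)"
      unfolding c' li p' by (simp add: algebra_simps power2_eq_square)
    finally have Adv: "2^(N+1+3) dvd A" unfolding p_def by (simp add: power_add)
    obtain u1 where u1a: "m = 2 * u1" using \<open>2 dvd m \<and> \<not> 4 dvd m\<close> by blast
    have "odd u1"
    proof
      assume "even u1" then obtain v where "u1 = 2 * v" by blast
      then have "4 dvd m" unfolding u1a by simp
      then show False using \<open>2 dvd m \<and> \<not> 4 dvd m\<close> by blast
    qed
    note u1 = u1a this
    obtain t where "N = 3 + t" using assms(1) le_Suc_ex by blast
    then have "l = 4 * (2 * k * 2^t)" unfolding assms(4) by (simp add: power_add)
    then have "4 dvd l" by (rule dvdI)
    then obtain l4 where l4: "l = 4 * l4" by blast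
    have nu: "n = 2 * (2 * l4 + u1)" using assms(6) l4 u1 by simp
    have uodd: "odd (int u1 * int (2 * l4 + u1))" using u1 by simp
    have "g n - (g m + of_nat l + of_nat l / (2 * of_nat m * of_nat n)) = of_int A / of_int (2^3 * (int u1 * int (2 * l4 + u1)))"
    proof -
      have den: "(of_int (2^3 * (int u1 * int (2 * l4 + u1))) :: rat) = 2 * of_nat m * of_nat n"
        unfolding nu u1(1) by simp
      have sj: "(-1::rat)^j = -1" using \<open>odd j\<close> by simp
      show ?thesis unfolding den gm gn A_def sj using m0 by (simp add: field_simps)
    qed
    then show "cong2 (N + 1) (g n) (g m + of_nat l + of_nat l / (2 * of_nat m * of_nat n))"
      by (rule cong2I[OF uodd Adv])
  next
    assume H: "4 dvd m \<and> \<not> 8 dvd m"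
    then have "j mod 8 = 3" unfolding mj by presburger
    then have "odd j" by presburger
    obtain c where c: "Q3 j = 64 * c" using R3[OF \<open>j mod 8 = 3\<close>] by (auto elim: dvdE)
    have c': "D - 2 * int m * (D + E) - 2 * int m ^ 2 + 1 = 64 * c" using c unfolding Q3_def mi D_def E_def by simp
    obtain u1 where u1a: "m = 4 * u1" using H by blast
    have "odd u1"
    proof
      assume "even u1" then obtain v where "u1 = 2 * v" by blast
      then have "8 dvd m" unfolding u1a by simp
      then show False using H by blast
    qed
    note u1 = u1a this
    define A where "A = - dd (l + j) * int m + D * int n - 2 * int l * int m * int n + int l"
    have "A = int l * (D - 2 * int m * (D + E) - 2 * int m ^ 2 + 1) - 16 * p * W * int m - 2 * int l ^ 2 * int m"
      unfolding A_def D' ni by (simp add: algebra_simps power2_eq_square)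
    also have "\<dots> = 64 * p * (int k * c - W * int u1 - int k ^ 2 * p' * int u1)"
      unfolding c' unfolding li p' u1(1) by (simp add: algebra_simps power2_eq_square)
    finally have Adv: "2^(N+1+5) dvd A" unfolding p_def by (simp add: power_add)
    obtain t where "N = 3 + t" using assms(1) le_Suc_ex by blast
    then have l4: "l = 4 * (2 * k * 2^t)" unfolding assms(4) by (simp add: power_add)
    have nu: "n = 4 * (2 * k * 2^t + u1)" using assms(6) l4 u1 by simp
    have uodd: "odd (int u1 * int (2 * k * 2^t + u1))" using u1 by simp
    have "g n - (g m + of_nat l - of_nat l / (2 * of_nat m * of_nat n)) = of_int A / of_int (2^5 * (int u1 * int (2 * k * 2^t + u1)))"
    proof -
      have den: "(of_int (2^5 * (int u1 * int (2 * k * 2^t + u1))) :: rat) = 2 * of_nat m * of_nat n"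
        unfolding nu u1(1) by simp
      have sj: "(-1::rat)^j = -1" using \<open>odd j\<close> by simp
      show ?thesis unfolding den gm gn A_def sj using m0 by (simp add: field_simps)
    qed
    then show "cong2 (N + 1) (g n) (g m + of_nat l - of_nat l / (2 * of_nat m * of_nat n))"
      by (rule cong2I[OF uodd Adv])
  qed
qed


end
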